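(* Let $0\le\underline{\tau}<\overline{\tau}<\infty$, $\gamma\ge0$, let $f$ be a piecewise continuous probability density supported on $[\underline{\tau},\overline{\tau}]$, and let $\beta:[0,\infty)\to(0,\infty)$ be continuous and decreasing with $\lim_{x\to+\infty}\beta(x)=0$ and such that $x\mapsto x\beta(x)$ is Lipschitz. Assume $\delta>0$. Then every nonnegative continuous solution $x$ of $$x'(t)=-\big(\delta+\beta(x(t))\big)x(t)+2\int_{\underline{\tau}}^{\overline{\tau}}e^{-\gamma\tau}f(\tau)\beta(x(t-\tau))x(t-\tau)\,d\tau,\qquad t\ge\overline{\tau},$$ (with continuous nonnegative initial values on $[0,\overline{\tau}]$) is bounded, i.e. $\limsup_{t\to+\infty}x(t)<+\infty$. *)

theory Defs
  imports "HOL-Analysis.Analysis"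
begin

definition piecewise_continuous_on :: "real \<Rightarrow> real \<Rightarrow> (real \<Rightarrow> real) \<Rightarrow> bool" where
  "piecewise_continuous_on a b f \<longleftrightarrow>
     (\<exists>S. finite S \<and>
          (\<forall>x\<in>{a..b} - S. continuous (at x within {a..b}) f) \<and>
          (\<forall>s\<in>S. (\<exists>l. (f \<longlongrightarrow> l) (at_left s)) \<and> (\<exists>r. (f \<longlongrightarrow> r) (at_right s))))"

definition prob_density_supported_on :: "real \<Rightarrow> real \<Rightarrow> (real \<Rightarrow> real) \<Rightarrow> bool" where
  "prob_density_supported_on a b f \<longleftrightarrow>
     (\<forall>s. 0 \<le> f s) \<and> (\<forall>s. s \<notin> {a..b} \<longrightarrow> f s = 0) \<and> (f has_integral 1) {a..b}"

end

theory Submission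
  imports Defs
begin

theorem proposition2p2:
  fixes tl tu \<gamma> \<delta> :: real
    and f \<beta> x :: "real \<Rightarrow> real"
  assumes "0 \<le> tl" "tl < tu" "0 \<le> \<gamma>" "0 < \<delta>"
    and "piecewise_continuous_on tl tu f"
    and "prob_density_supported_on tl tu f"
    and "continuous_on {0..} \<beta>"
    and "\<forall>y\<ge>0. 0 < \<beta> y"
    and "\<forall>y z. 0 \<le> y \<longrightarrow> y \<le> z \<longrightarrow> \<beta> z \<le> \<beta> y"
    and "(\<beta> \<longlongrightarrow> 0) at_top"
    and "\<exists>L. L-lipschitz_on {0..} (\<lambda>y. y * \<beta> y)"
    and "continuous_on {0..} x"
    and "\<forall>t\<ge>0. 0 \<le> x t"
    and "\<forall>t\<ge>tu. (x has_real_derivative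
            (- (\<delta> + \<beta> (x t)) * x t
             + 2 * integral {tl..tu} (\<lambda>s. exp (- \<gamma> * s) * f s * \<beta> (x (t - s)) * x (t - s))))
           (at t within {tu..})"
  shows "Limsup at_top (\<lambda>t. ereal (x t)) < \<infinity>"
proof -
  note A = assms
  have fpos: "\<And>s. 0 \<le> f s" and fint: "(f has_integral 1) {tl..tu}"
    using A(6) unfolding prob_density_supported_on_def by auto
  have "\<forall>\<^sub>F y in at_top. \<beta> y < \<delta>/4"
    using order_tendstoD(2)[OF A(10), of "\<delta>/4"] A(4) by simp
  then obtain Y0 where Y0: "\<And>y. y \<ge> Y0 \<Longrightarrow> \<beta> y < \<delta>/4"
    by (auto simp: eventually_at_top_linorder)
  define Y where "Y = max Y0 0"
  define C where "C = Y * \<beta> 0"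
  have C0: "C \<ge> 0" unfolding C_def Y_def using A(8) by (simp add: less_imp_le)
  have gb: "y * \<beta> y \<le> \<delta>/4 * y + C" if "y \<ge> 0" for y
  proof (cases "y \<ge> Y")
    case True
    then have "\<beta> y < \<delta>/4" using Y0 Y_def by auto
    then have "y * \<beta> y \<le> y * (\<delta>/4)" using that by (intro mult_left_mono) auto
    then show ?thesis using C0 by (simp add: mult.commute)
  next
    case False
    have b: "\<beta> y \<le> \<beta> 0" "0 < \<beta> y" using A(8,9) that by auto
    have "y * \<beta> y \<le> Y * \<beta> y" using False b by (simp add: mult_right_mono)
    also have "\<dots> \<le> Y * \<beta> 0" using b Y_def by (simp add: mult_left_mono)
    moreover have "0 \<le> \<delta>/4 * y" using that A(4) by simp
    ultimately show ?thesis using C_def by linarith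
  qed
  have g0: "0 \<le> y * \<beta> y" if "y \<ge> 0" for y using A(8) that by (simp add: less_imp_le)
  obtain t0 where t0: "t0 \<in> {0..tu}" "\<forall>y\<in>{0..tu}. x y \<le> x t0"
  proof -
    have c: "continuous_on {0..tu} x" using continuous_on_subset[OF A(12)] by auto
    have ne: "{0..tu} \<noteq> {}" using A(1,2) by simp
    show ?thesis using continuous_attains_sup[OF compact_Icc ne c] that by blast
  qed
  define K where "K = max (x t0) (4 * C / \<delta>) + 1"
  have bound: "x t \<le> K" if "t \<ge> 0" for t
  proof (rule ccontr)
    assume "\<not> x t \<le> K"
    then have xt: "x t > K" by simp
    have ttu: "t > tu"
    proof (rule ccontr)
      assume "\<not> t > tu" then have "x t \<le> x t0" using t0 that by auto
      then show False using xt K_def by simp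
    qed
    define S where "S = {tu..t} \<inter> x -` {K..}"
    have clS: "closed S" unfolding S_def
      by (rule continuous_closed_preimage) (use continuous_on_subset[OF A(12)] A(1,2) in auto)
    have "t \<in> S" unfolding S_def using xt ttu by auto
    then have Sne: "S \<noteq> {}" by blast
    have bdd: "bdd_below S" unfolding S_def by (auto intro: bdd_belowI[of _ tu])
    define t1 where "t1 = Inf S"
    have t1S: "t1 \<in> S" using closed_contains_Inf[OF Sne bdd clS] t1_def by simp
    then have t1: "tu \<le> t1" "K \<le> x t1" using S_def by auto
    have before: "x s < K" if "0 \<le> s" "s < t1" for s
    proof (cases "s \<le> tu")
      case True then have "x s \<le> x t0" using t0 that by auto
      then show ?thesis using K_def by simp
    next
      case False
      have "s \<notin> S" using that t1_def bdd cInf_lower by (metis not_le)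
      then show ?thesis using False S_def t1S that(2) by auto
    qed
    have t1gt: "t1 > tu"
    proof (rule ccontr)
      assume "\<not> tu < t1" then have "t1 = tu" using t1 by simp
      then have "x t1 \<le> x t0" using t0 A(1,2) by auto
      then show False using t1 K_def by simp
    qed
    define X where "X = x t1"
    have X0: "X \<ge> 0" using A(13) t1 A(1,2) X_def by auto
    have win: "x (t1 - s) \<le> X" "0 \<le> x (t1 - s)" if "s \<in> {tl..tu}" for s
    proof -
      show "0 \<le> x (t1 - s)" using A(13) that t1 by auto
      show "x (t1 - s) \<le> X"
      proof (cases "s = 0")
        case True then show ?thesis by (simp add: X_def)
      next
        case False
        then have "s > 0" using that A(1) by auto
        then have "x (t1 - s) < K" using before[of "t1 - s"] that t1 by auto
        then show ?thesis using t1 X_def by simp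
      qed
    qed
    define h where "h = (\<lambda>s. exp (- \<gamma> * s) * f s * \<beta> (x (t1 - s)) * x (t1 - s))"
    have hle: "h s \<le> f s * (\<delta>/4 * X + C)" if "s \<in> {tl..tu}" for s
    proof -
      have e: "exp (- \<gamma> * s) \<le> 1" using A(1,3) that by auto
      have g: "0 \<le> x (t1 - s) * \<beta> (x (t1 - s))" using g0 win(2)[OF that] by blast
      have "x (t1 - s) * \<beta> (x (t1 - s)) \<le> \<delta>/4 * x (t1 - s) + C" using gb win(2)[OF that] by blast
      also have "\<dots> \<le> \<delta>/4 * X + C" using win(1)[OF that] A(4) by simp
      finally have g2: "x (t1 - s) * \<beta> (x (t1 - s)) \<le> \<delta>/4 * X + C" .
      have "h s = exp (- \<gamma> * s) * (f s * (x (t1 - s) * \<beta> (x (t1 - s))))" unfolding h_def by simp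
      also have "\<dots> \<le> 1 * (f s * (x (t1 - s) * \<beta> (x (t1 - s))))"
        by (rule mult_right_mono[OF e]) (use fpos g in simp)
      also have "\<dots> \<le> f s * (\<delta>/4 * X + C)" using g2 fpos by (simp add: mult_left_mono)
      finally show ?thesis .
    qed
    have fint2: "((\<lambda>s. f s * (\<delta>/4 * X + C)) has_integral 1 * (\<delta>/4 * X + C)) {tl..tu}"
      using has_integral_mult_left[OF fint] by blast
    have Ibd: "integral {tl..tu} h \<le> \<delta>/4 * X + C"
    proof (cases "h integrable_on {tl..tu}")
      case True
      have "integral {tl..tu} h \<le> integral {tl..tu} (\<lambda>s. f s * (\<delta>/4 * X + C))"
      proof (rule integral_le[OF True])
        show "(\<lambda>s. f s * (\<delta>/4 * X + C)) integrable_on {tl..tu}"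
          using fint2 by (rule has_integral_integrable)
        show "\<And>s. s \<in> {tl..tu} \<Longrightarrow> h s \<le> f s * (\<delta>/4 * X + C)" by (rule hle)
      qed
      moreover have "integral {tl..tu} (\<lambda>s. f s * (\<delta>/4 * X + C)) = \<delta>/4 * X + C"
        using integral_unique[OF fint2] by simp
      ultimately show ?thesis by linarith
    next
      case False then have "integral {tl..tu} h = 0" by (rule not_integrable_integral)
      moreover have "0 \<le> \<delta>/4 * X" using X0 A(4) by simp
      ultimately show ?thesis using C0 by linarith
    qed
    define D where "D = - (\<delta> + \<beta> (x t1)) * x t1 + 2 * integral {tl..tu} h"
    have der: "(x has_real_derivative D) (at t1 within {tu..})"
      using A(14) t1 unfolding D_def h_def by auto
    then have "(x has_real_derivative D) (at t1 within {tu<..})"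
      by (rule DERIV_subset) auto
    then have der2: "(x has_real_derivative D) (at t1)"
      using at_within_open[of t1 "{tu<..}"] t1gt by auto
    have bX: "0 \<le> \<beta> X * X" using g0[OF X0] by (simp add: mult.commute)
    have XK: "X > 4 * C / \<delta>" using t1 X_def K_def by simp
    then have "\<delta> * X > 4 * C" using A(4) by (simp add: field_simps)
    then have Dneg: "D < 0" unfolding D_def using Ibd bX X_def by (simp add: algebra_simps)
    obtain d where d: "d > 0" "\<And>hh. hh > 0 \<Longrightarrow> hh < d \<Longrightarrow> x t1 < x (t1 - hh)"
      using DERIV_neg_dec_left[OF der2 Dneg] by blast
    define hh where "hh = min (d/2) (t1 - tu)"
    have hh: "hh > 0" "hh < d" using d t1gt hh_def by auto
    have "x t1 < x (t1 - hh)" using d(2) hh by blast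
    moreover have "x (t1 - hh) < K" using before[of "t1 - hh"] hh hh_def A(1,2) by auto
    ultimately show False using t1 by simp
  qed
  have "Limsup at_top (\<lambda>t. ereal (x t)) \<le> ereal K"
  proof (rule Limsup_bounded)
    show "\<forall>\<^sub>F t in at_top. ereal (x t) \<le> ereal K"
      unfolding eventually_at_top_linorder using bound by auto
  qed
  moreover have "ereal K < \<infinity>" by simp
  ultimately show ?thesis by (rule le_less_trans)
qed

end
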